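(* Let $n>1$, $\rho>0$ and $c>0$, and let $\mathrm{ad}(B_1^R)^*$ denote the adjoint of $\mathrm{ad}(B_1^R)$ with respect to the inner product $g_\rho^c$ on $\mathfrak{l}$. Then $[\mathrm{ad}(B_1^R),\mathrm{ad}(B_1^R)^*]\neq0$.
   Context: Fix $n\ge 2$, $\rho>0$, $c\ge0$. The real Lie algebra $\mathfrak{l}$ has basis $B_a^R,B_a^I$ ($a=1,\dots,n-1$), $e_k,f_k$ ($k=0,\dots,n-1$), $Z$. Brackets (unlisted brackets of basis elements, up to antisymmetry, are zero): $[B_1^R,B_1^I]=2B_1^I$; for $a\in\{2,\dots,n-1\}$: $[B_1^R,B_a^R]=B_a^R$, $[B_1^R,B_a^I]=B_a^I$, $[B_a^R,B_a^I]=\tfrac12B_1^I$; $[e_0,f_0]=Z$, $[e_a,f_a]=-Z$ ($a\ge1$); $[B,Z]=0$. Mixed brackets after complex-bilinear extension, $E_k:=e_k-if_k$, $[B,\bar E_k]=\overline{[B,E_k]}$ for real $B$: for $a\ge2$, $[B_1^R,E_k]=-\delta_{k0}E_1-\delta_{k1}E_0$, $[B_a^R,E_k]=-\tfrac12(\delta_{k0}+\delta_{k1})E_a-\tfrac12\delta_{ka}(E_0-E_1)$, $[B_1^I,E_k]=-i(\delta_{k0}+\delta_{k1})(E_0-E_1)$, $[B_a^I,E_k]=\tfrac{i}{2}(\delta_{k0}+\delta_{k1})E_a-\tfrac{i}{2}\delta_{ka}(E_0-E_1)$. Inner product $g_\rho^c$: $g(B_1^R,B_1^R)=\frac{\rho+c}{\rho}$,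 $g(B_1^I,B_1^I)=\frac{(\rho+c)^3}{\rho^2(\rho+2c)}$, $g(B_a^R,B_a^R)=g(B_a^I,B_a^I)=\frac{\rho+c}{4\rho}$ ($a\ge2$), $g(e_0,e_0)=g(f_0,f_0)=\frac{\rho+2c}{4\rho^2}$, $g(e_a,e_a)=g(f_a,f_a)=\frac1{4\rho}$ ($a\ge1$), $g(Z,Z)=\frac{\rho+c}{4\rho^2(\rho+2c)}$, $g(B_1^I,Z)=-\frac{c(\rho+c)}{2\rho^2(\rho+2c)}$, all other distinct basis pairs orthogonal. *)

theory Defs
  imports Complex_Main
begin

(* Basis labels of the real Lie algebra l:
   LBR a = B_a^R, LBI a = B_a^I (1 <= a <= n-1),
   LE k = e_k, LF k = f_k (0 <= k <= n-1), LZ = Z. *)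
datatype lbasis = LBR nat | LBI nat | LE nat | LF nat | LZ

definition lbas :: "nat \<Rightarrow> lbasis set" where
  "lbas n = LBR ` {1..n-1} \<union> LBI ` {1..n-1} \<union> LE ` {..<n} \<union> LF ` {..<n} \<union> {LZ}"

definition lvec :: "nat \<Rightarrow> (lbasis \<Rightarrow> real) set" where
  "lvec n = {v. \<forall>j. j \<notin> lbas n \<longrightarrow> v j = 0}"

definition ind :: "lbasis \<Rightarrow> lbasis \<Rightarrow> real" where
  "ind b j = (if j = b then 1 else 0)"

(* Listed brackets [x,y] of basis elements (as coordinate vectors, last argument
   = coordinate).  The mixed brackets are the real/imaginary parts of the
   complex brackets with E_k = e_k - i f_k. *)
definition bu :: "lbasis \<Rightarrow> lbasis \<Rightarrow> lbasis \<Rightarrow> real" where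
  "bu x y j = (case (x, y) of
     (LBR a, LBR b) \<Rightarrow> (if a = 1 \<and> b \<ge> 2 then ind (LBR b) j else 0)
   | (LBR a, LBI b) \<Rightarrow>
        (if a = 1 \<and> b = 1 then 2 * ind (LBI 1) j
         else if a = 1 \<and> b \<ge> 2 then ind (LBI b) j
         else if a \<ge> 2 \<and> b = a then (1/2) * ind (LBI 1) j else 0)
   | (LBR a, LE k) \<Rightarrow>
        (if a = 1 then (if k = 0 then - ind (LE 1) j else if k = 1 then - ind (LE 0) j else 0)
         else (if k = 0 \<or> k = 1 then - (1/2) * ind (LE a) j
               else if k = a then - (1/2) * (ind (LE 0) j - ind (LE 1) j) else 0))
   | (LBR a, LF k) \<Rightarrow>
        (if a = 1 then (if k = 0 then - ind (LF 1) j else if k = 1 then - ind (LF 0) j else 0)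
         else (if k = 0 \<or> k = 1 then - (1/2) * ind (LF a) j
               else if k = a then - (1/2) * (ind (LF 0) j - ind (LF 1) j) else 0))
   | (LBI a, LE k) \<Rightarrow>
        (if a = 1 then (if k = 0 \<or> k = 1 then - (ind (LF 0) j - ind (LF 1) j) else 0)
         else (if k = 0 \<or> k = 1 then (1/2) * ind (LF a) j
               else if k = a then - (1/2) * (ind (LF 0) j - ind (LF 1) j) else 0))
   | (LBI a, LF k) \<Rightarrow>
        (if a = 1 then (if k = 0 \<or> k = 1 then ind (LE 0) j - ind (LE 1) j else 0)
         else (if k = 0 \<or> k = 1 then - (1/2) * ind (LE a) j
               else if k = a then (1/2) * (ind (LE 0) j - ind (LE 1) j) else 0))
   | (LE k, LF l) \<Rightarrow> (if k = l then (if k = 0 then ind LZ j else - ind LZ j) else 0)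
   | _ \<Rightarrow> 0)"

definition brb :: "lbasis \<Rightarrow> lbasis \<Rightarrow> lbasis \<Rightarrow> real" where
  "brb x y j = bu x y j - bu y x j"

definition lbr :: "nat \<Rightarrow> (lbasis \<Rightarrow> real) \<Rightarrow> (lbasis \<Rightarrow> real) \<Rightarrow> (lbasis \<Rightarrow> real)" where
  "lbr n u v = (\<lambda>j. \<Sum>x\<in>lbas n. \<Sum>y\<in>lbas n. u x * v y * brb x y j)"

definition ad :: "nat \<Rightarrow> (lbasis \<Rightarrow> real) \<Rightarrow> (lbasis \<Rightarrow> real) \<Rightarrow> (lbasis \<Rightarrow> real)" where
  "ad n u = lbr n u"

definition gdiag :: "real \<Rightarrow> real \<Rightarrow> lbasis \<Rightarrow> real" where
  "gdiag \<rho> c x = (case x of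
     LBR a \<Rightarrow> (if a = 1 then (\<rho> + c) / \<rho> else (\<rho> + c) / (4 * \<rho>))
   | LBI a \<Rightarrow> (if a = 1 then (\<rho> + c)^3 / (\<rho>^2 * (\<rho> + 2*c)) else (\<rho> + c) / (4 * \<rho>))
   | LE k \<Rightarrow> (if k = 0 then (\<rho> + 2*c) / (4 * \<rho>^2) else 1 / (4 * \<rho>))
   | LF k \<Rightarrow> (if k = 0 then (\<rho> + 2*c) / (4 * \<rho>^2) else 1 / (4 * \<rho>))
   | LZ \<Rightarrow> (\<rho> + c) / (4 * \<rho>^2 * (\<rho> + 2*c)))"

definition gram :: "real \<Rightarrow> real \<Rightarrow> lbasis \<Rightarrow> lbasis \<Rightarrow> real" where
  "gram \<rho> c x y =
     (if x = y then gdiag \<rho> c x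
      else if (x = LBI 1 \<and> y = LZ) \<or> (x = LZ \<and> y = LBI 1)
        then - (c * (\<rho> + c)) / (2 * \<rho>^2 * (\<rho> + 2*c))
      else 0)"

definition ginner :: "nat \<Rightarrow> real \<Rightarrow> real \<Rightarrow> (lbasis \<Rightarrow> real) \<Rightarrow> (lbasis \<Rightarrow> real) \<Rightarrow> real" where
  "ginner n \<rho> c u v = (\<Sum>x\<in>lbas n. \<Sum>y\<in>lbas n. u x * v y * gram \<rho> c x y)"

definition is_adjoint ::
  "nat \<Rightarrow> real \<Rightarrow> real \<Rightarrow> ((lbasis \<Rightarrow> real) \<Rightarrow> (lbasis \<Rightarrow> real))
       \<Rightarrow> ((lbasis \<Rightarrow> real) \<Rightarrow> (lbasis \<Rightarrow> real)) \<Rightarrow> bool" where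
  "is_adjoint n \<rho> c A T \<longleftrightarrow>
     (\<forall>v\<in>lvec n. T v \<in> lvec n) \<and>
     (\<forall>u\<in>lvec n. \<forall>v\<in>lvec n. ginner n \<rho> c (A u) v = ginner n \<rho> c u (T v))"

end

theory Submission
  imports Defs
begin

lemma fin_lbas[simp]: "finite (lbas n)" by (simp add: lbas_def)

lemma mem_lbas[simp]:
  "LBR a \<in> lbas n \<longleftrightarrow> 1 \<le> a \<and> a \<le> n - 1"
  "LBI a \<in> lbas n \<longleftrightarrow> 1 \<le> a \<and> a \<le> n - 1"
  "LE k \<in> lbas n \<longleftrightarrow> k < n"
  "LF k \<in> lbas n \<longleftrightarrow> k < n"
  "LZ \<in> lbas n"
  by (auto simp: lbas_def)

lemma sum_ind1[simp]:
  assumes "finite S" shows "(\<Sum>x\<in>S. f x * ind b x) = (if b \<in> S then f b else 0)"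
proof -
  have "(\<Sum>x\<in>S. f x * ind b x) = (\<Sum>x\<in>S. if x = b then f x else 0)"
    by (rule sum.cong) (auto simp: ind_def)
  also have "\<dots> = (if b \<in> S then f b else 0)" using assms by (rule sum.delta)
  finally show ?thesis .
qed

lemma sum_ind2[simp]:
  assumes "finite S" shows "(\<Sum>x\<in>S. ind b x * f x) = (if b \<in> S then f b else 0)"
  using sum_ind1[OF assms, of f b] by (simp add: mult.commute)

lemma brb_B1R:
  "brb (LBR 1) y x = (case y of
      LBR a \<Rightarrow> if a \<ge> 2 then ind (LBR a) x else 0
    | LBI a \<Rightarrow> if a = 1 then 2 * ind (LBI 1) x else if a \<ge> 2 then ind (LBI a) x else 0
    | LE k \<Rightarrow> if k = 0 then - ind (LE 1) x else if k = 1 then - ind (LE 0) x else 0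
    | LF k \<Rightarrow> if k = 0 then - ind (LF 1) x else if k = 1 then - ind (LF 0) x else 0
    | LZ \<Rightarrow> 0)"
  by (cases y) (auto simp: brb_def bu_def)

lemmas brb_B1R' = brb_B1R[unfolded One_nat_def]

lemma ad_apply:
  assumes "n > 1"
  shows "ad n (ind (LBR 1)) u x = (\<Sum>y\<in>lbas n. u y * brb (LBR 1) y x)"
proof -
  have "ad n (ind (LBR 1)) u x = (\<Sum>z\<in>lbas n. ind (LBR 1) z * (\<Sum>y\<in>lbas n. u y * brb z y x))"
    by (simp add: ad_def lbr_def sum_distrib_left mult_ac)
  also have "\<dots> = (\<Sum>y\<in>lbas n. u y * brb (LBR 1) y x)"
    using assms by (subst sum_ind2) auto
  finally show ?thesis .
qed

definition rr :: "real \<Rightarrow> real \<Rightarrow> real" where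
  "rr \<rho> c = - (c * (\<rho> + c)) / (2 * \<rho>^2 * (\<rho> + 2*c))"

lemma gram_alt:
  "gram \<rho> c x y = gdiag \<rho> c x * ind x y +
     (if x = LBI 1 then rr \<rho> c * ind LZ y else if x = LZ then rr \<rho> c * ind (LBI 1) y else 0)"
  by (auto simp: gram_def ind_def rr_def)

lemma Gv:
  assumes "n > 1" "x \<in> lbas n"
  shows "(\<Sum>y\<in>lbas n. v y * gram \<rho> c x y) = gdiag \<rho> c x * v x +
     (if x = LBI 1 then rr \<rho> c * v LZ else if x = LZ then rr \<rho> c * v (LBI 1) else 0)"
proof -
  have "(\<Sum>y\<in>lbas n. v y * gram \<rho> c x y) = (\<Sum>y\<in>lbas n. (gdiag \<rho> c x * v y) * ind x y) +
     (\<Sum>y\<in>lbas n. (if x = LBI 1 then rr \<rho> c * v y else 0) * ind LZ y) +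
     (\<Sum>y\<in>lbas n. (if x = LZ then rr \<rho> c * v y else 0) * ind (LBI 1) y)"
    unfolding sum.distrib[symmetric]
    by (rule sum.cong) (auto simp: gram_def ind_def rr_def)
  also have "\<dots> = gdiag \<rho> c x * v x +
     (if x = LBI 1 then rr \<rho> c * v LZ else if x = LZ then rr \<rho> c * v (LBI 1) else 0)"
    using assms by (simp only: sum_ind1 fin_lbas) auto
  finally show ?thesis .
qed


lemma sum_ind3[simp]:
  assumes "finite S" shows "(\<Sum>x\<in>S. (k * ind b x) * f x) = (if b \<in> S then k * f b else 0)"
     "(\<Sum>x\<in>S. (- ind b x) * f x) = (if b \<in> S then - f b else 0)"
  using sum_ind2[OF assms, of b "\<lambda>x. k * f x"] sum_ind2[OF assms, of b "\<lambda>x. - f x"]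
  by (simp_all add: mult_ac)

lemma ginner_left:
  assumes "n > 1"
  shows "ginner n \<rho> c (ad n (ind (LBR 1)) u) v =
    (\<Sum>y\<in>lbas n. u y * (\<Sum>x\<in>lbas n. brb (LBR 1) y x * (\<Sum>z\<in>lbas n. v z * gram \<rho> c x z)))"
proof -
  have "ginner n \<rho> c (ad n (ind (LBR 1)) u) v =
     (\<Sum>x\<in>lbas n. ad n (ind (LBR 1)) u x * (\<Sum>z\<in>lbas n. v z * gram \<rho> c x z))"
    unfolding ginner_def by (simp add: sum_distrib_left mult_ac)
  also have "\<dots> =
     (\<Sum>x\<in>lbas n. (\<Sum>y\<in>lbas n. u y * brb (LBR 1) y x) * (\<Sum>z\<in>lbas n. v z * gram \<rho> c x z))"
    by (simp only: ad_apply[OF assms])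
  also have "\<dots> = (\<Sum>x\<in>lbas n. \<Sum>y\<in>lbas n. u y * (brb (LBR 1) y x * (\<Sum>z\<in>lbas n. v z * gram \<rho> c x z)))"
    by (simp only: sum_distrib_right mult.assoc)
  also have "\<dots> = (\<Sum>y\<in>lbas n. \<Sum>x\<in>lbas n. u y * (brb (LBR 1) y x * (\<Sum>z\<in>lbas n. v z * gram \<rho> c x z)))"
    by (rule sum.swap)
  also have "\<dots> = (\<Sum>y\<in>lbas n. u y * (\<Sum>x\<in>lbas n. brb (LBR 1) y x * (\<Sum>z\<in>lbas n. v z * gram \<rho> c x z)))"
    by (simp add: sum_distrib_left)
  finally show ?thesis .
qed

lemma ginner_right:
  "ginner n \<rho> c u w = (\<Sum>y\<in>lbas n. u y * (\<Sum>z\<in>lbas n. w z * gram \<rho> c y z))"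
  by (simp add: ginner_def sum_distrib_left mult_ac)

definition DD :: "real \<Rightarrow> real \<Rightarrow> real" where
  "DD \<rho> c = gdiag \<rho> c (LBI 1) * gdiag \<rho> c LZ - (rr \<rho> c)^2"

lemma DD_pos: assumes "\<rho> > 0" "c > 0" shows "DD \<rho> c > 0"
proof -
  have "DD \<rho> c = (\<rho> + c)^2 * (\<rho> * (\<rho> + 2*c)) / (4 * \<rho>^4 * (\<rho> + 2*c)^2)"
    using assms unfolding DD_def gdiag_def rr_def
    by (simp add: divide_simps) (simp add: algebra_simps power2_eq_square power3_eq_cube power4_eq_xxxx)
  then show ?thesis using assms by simp
qed

definition Tm :: "nat \<Rightarrow> real \<Rightarrow> real \<Rightarrow> (lbasis \<Rightarrow> real) \<Rightarrow> (lbasis \<Rightarrow> real)" where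
  "Tm n \<rho> c v j = (case j of
     LBR a \<Rightarrow> if 2 \<le> a \<and> a \<le> n - 1 then v (LBR a) else 0
   | LBI a \<Rightarrow> if a = 1 then (2 * gdiag \<rho> c (LBI 1) * gdiag \<rho> c LZ * v (LBI 1)
                               + 2 * rr \<rho> c * gdiag \<rho> c LZ * v LZ) / DD \<rho> c
              else if 2 \<le> a \<and> a \<le> n - 1 then v (LBI a) else 0
   | LE k \<Rightarrow> if k = 0 then - (gdiag \<rho> c (LE 1) / gdiag \<rho> c (LE 0)) * v (LE 1)
             else if k = 1 then - (gdiag \<rho> c (LE 0) / gdiag \<rho> c (LE 1)) * v (LE 0) else 0
   | LF k \<Rightarrow> if k = 0 then - (gdiag \<rho> c (LF 1) / gdiag \<rho> c (LF 0)) * v (LF 1)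
             else if k = 1 then - (gdiag \<rho> c (LF 0) / gdiag \<rho> c (LF 1)) * v (LF 0) else 0
   | LZ \<Rightarrow> (- 2 * gdiag \<rho> c (LBI 1) * rr \<rho> c * v (LBI 1) - 2 * (rr \<rho> c)^2 * v LZ) / DD \<rho> c)"

lemma Tm_lvec: "n > 1 \<Longrightarrow> Tm n \<rho> c v \<in> lvec n"
  unfolding lvec_def by (auto simp: Tm_def split: lbasis.splits)

lemma gdiag_pos: "\<rho> > 0 \<Longrightarrow> c > 0 \<Longrightarrow> gdiag \<rho> c x > 0"
  by (cases x) (auto simp: gdiag_def)

lemma lhs_ind:
  assumes "brb (LBR 1) y = (\<lambda>x. k * ind b x)" "b \<in> lbas n"
  shows "(\<Sum>x\<in>lbas n. brb (LBR 1) y x * F x) = k * F b"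
  unfolding assms(1) using assms(2) by simp

lemma lhs_0:
  assumes "brb (LBR 1) y = (\<lambda>x. 0)"
  shows "(\<Sum>x\<in>lbas n. brb (LBR 1) y x * F x) = 0"
  unfolding assms by simp

lemma alg1:
  fixes p q r x z :: real
  assumes "p*q - r^2 \<noteq> 0"
  shows "p * ((2*p*q*x + 2*r*q*z)/(p*q - r^2)) + r * ((-2*p*r*x - 2*r^2*z)/(p*q-r^2)) = 2*(p*x + r*z)"
    and "r * ((2*p*q*x + 2*r*q*z)/(p*q - r^2)) + q * ((-2*p*r*x - 2*r^2*z)/(p*q-r^2)) = 0"
proof -
  let ?D = "p*q - r^2"
  have e1: "p*(2*p*q*x + 2*r*q*z) + r*(-2*p*r*x - 2*r^2*z) = (2*(p*x + r*z)) * ?D"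
    by (simp add: algebra_simps power2_eq_square)
  have e2: "r*(2*p*q*x + 2*r*q*z) + q*(-2*p*r*x - 2*r^2*z) = 0 * ?D"
    by (simp add: algebra_simps power2_eq_square)
  show "p * ((2*p*q*x + 2*r*q*z)/?D) + r * ((-2*p*r*x - 2*r^2*z)/?D) = 2*(p*x + r*z)"
    using assms e1 by (simp add: times_divide_eq_right add_divide_distrib[symmetric])
  show "r * ((2*p*q*x + 2*r*q*z)/?D) + q * ((-2*p*r*x - 2*r^2*z)/?D) = 0"
    using assms e2 by (simp add: times_divide_eq_right add_divide_distrib[symmetric])
qed

lemma TmB: "Tm n \<rho> c v (LBI 1) = (2 * gdiag \<rho> c (LBI 1) * gdiag \<rho> c LZ * v (LBI 1)
                               + 2 * rr \<rho> c * gdiag \<rho> c LZ * v LZ) / DD \<rho> c"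
  and TmZ: "Tm n \<rho> c v LZ = (- 2 * gdiag \<rho> c (LBI 1) * rr \<rho> c * v (LBI 1) - 2 * (rr \<rho> c)^2 * v LZ) / DD \<rho> c"
  by (simp_all add: Tm_def)

lemma per_y:
  assumes "n > 1" "\<rho> > 0" "c > 0" "y \<in> lbas n"
  shows "(\<Sum>x\<in>lbas n. brb (LBR 1) y x * (\<Sum>z\<in>lbas n. v z * gram \<rho> c x z))
       = (\<Sum>z\<in>lbas n. Tm n \<rho> c v z * gram \<rho> c y z)"
proof -
  have G: "\<And>w x. x \<in> lbas n \<Longrightarrow> (\<Sum>z\<in>lbas n. w z * gram \<rho> c x z) = gdiag \<rho> c x * w x +
     (if x = LBI 1 then rr \<rho> c * w LZ else if x = LZ then rr \<rho> c * w (LBI 1) else 0)"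
    using Gv[OF assms(1)] by blast
  have D: "DD \<rho> c \<noteq> 0" using DD_pos assms by force
  have p: "gdiag \<rho> c (LE 0) \<noteq> 0" "gdiag \<rho> c (LE 1) \<noteq> 0" "gdiag \<rho> c (LF 0) \<noteq> 0" "gdiag \<rho> c (LF 1) \<noteq> 0"
    using gdiag_pos assms by (metis less_irrefl)+
  have L1: "(\<Sum>x\<in>lbas n. brb (LBR 1) y x * (\<Sum>z\<in>lbas n. v z * gram \<rho> c x z)) = k * (gdiag \<rho> c b * v b +
     (if b = LBI 1 then rr \<rho> c * v LZ else if b = LZ then rr \<rho> c * v (LBI 1) else 0))"
    if "brb (LBR 1) y = (\<lambda>x. k * ind b x)" "b \<in> lbas n" for k b
    using lhs_ind[OF that, of "\<lambda>x. \<Sum>z\<in>lbas n. v z * gram \<rho> c x z"] G[OF that(2)] by simp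
  have L0: "(\<Sum>x\<in>lbas n. brb (LBR 1) y x * (\<Sum>z\<in>lbas n. v z * gram \<rho> c x z)) = 0"
    if "brb (LBR 1) y = (\<lambda>x. 0)" by (rule lhs_0[OF that])
  have R: "(\<Sum>z\<in>lbas n. Tm n \<rho> c v z * gram \<rho> c y z) = gdiag \<rho> c y * Tm n \<rho> c v y +
     (if y = LBI 1 then rr \<rho> c * Tm n \<rho> c v LZ else if y = LZ then rr \<rho> c * Tm n \<rho> c v (LBI 1) else 0)"
    using G[OF assms(4)] by blast
  show ?thesis
  proof (cases y)
    case (LBR a)
    show ?thesis
    proof (cases "a \<ge> 2")
      case True
      have "brb (LBR 1) y = (\<lambda>x. 1 * ind (LBR a) x)" using True LBR by (intro ext) (auto simp: brb_B1R brb_B1R')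
      from L1[OF this] show ?thesis unfolding R using assms True LBR by (simp add: Tm_def)
    next
      case False
      have "brb (LBR 1) y = (\<lambda>x. 0)" using False LBR by (intro ext) (auto simp: brb_B1R brb_B1R')
      from L0[OF this] show ?thesis unfolding R using assms False LBR by (simp add: Tm_def)
    qed
  next
    case (LBI a)
    show ?thesis
    proof (cases "a = 1")
      case True
      have "brb (LBR 1) y = (\<lambda>x. 2 * ind (LBI 1) x)" using True LBI by (intro ext) (auto simp: brb_B1R brb_B1R')
      from L1[OF this] have X: "?thesis \<longleftrightarrow> 2 * (gdiag \<rho> c (LBI 1) * v (LBI 1) + rr \<rho> c * v LZ) =
          gdiag \<rho> c (LBI 1) * Tm n \<rho> c v (LBI 1) + rr \<rho> c * Tm n \<rho> c v LZ"
        unfolding R using True LBI assms by simp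
      have E: "2 * (gdiag \<rho> c (LBI 1) * v (LBI 1) + rr \<rho> c * v LZ) =
          gdiag \<rho> c (LBI 1) * Tm n \<rho> c v (LBI 1) + rr \<rho> c * Tm n \<rho> c v LZ" unfolding TmB TmZ DD_def
        using alg1(1)[of "gdiag \<rho> c (LBI 1)" "gdiag \<rho> c LZ" "rr \<rho> c"] D unfolding DD_def by simp
      with X show ?thesis by blast
    next
      case False
      have "brb (LBR 1) y = (\<lambda>x. 1 * ind (LBI a) x)" using False LBI assms by (intro ext) (auto simp: brb_B1R brb_B1R')
      from L1[OF this] show ?thesis unfolding R using assms False LBI by (simp add: Tm_def)
    qed
  next
    case (LE k)
    consider "k = 0" | "k = 1" | "k \<ge> 2" by linarith
    then show ?thesis
    proof cases
      case 1
      have "brb (LBR 1) y = (\<lambda>x. (-1) * ind (LE 1) x)" using 1 LE by (intro ext) (auto simp: brb_B1R brb_B1R')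
      from L1[OF this] show ?thesis unfolding R using assms 1 LE p by (simp add: Tm_def)
    next
      case 2
      have "brb (LBR 1) y = (\<lambda>x. (-1) * ind (LE 0) x)" using 2 LE by (intro ext) (auto simp: brb_B1R brb_B1R')
      from L1[OF this] show ?thesis unfolding R using assms 2 LE p by (simp add: Tm_def)
    next
      case 3
      have "brb (LBR 1) y = (\<lambda>x. 0)" using 3 LE by (intro ext) (auto simp: brb_B1R brb_B1R')
      from L0[OF this] show ?thesis unfolding R using assms 3 LE by (simp add: Tm_def)
    qed
  next
    case (LF k)
    consider "k = 0" | "k = 1" | "k \<ge> 2" by linarith
    then show ?thesis
    proof cases
      case 1
      have "brb (LBR 1) y = (\<lambda>x. (-1) * ind (LF 1) x)" using 1 LF by (intro ext) (auto simp: brb_B1R brb_B1R')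
      from L1[OF this] show ?thesis unfolding R using assms 1 LF p by (simp add: Tm_def)
    next
      case 2
      have "brb (LBR 1) y = (\<lambda>x. (-1) * ind (LF 0) x)" using 2 LF by (intro ext) (auto simp: brb_B1R brb_B1R')
      from L1[OF this] show ?thesis unfolding R using assms 2 LF p by (simp add: Tm_def)
    next
      case 3
      have "brb (LBR 1) y = (\<lambda>x. 0)" using 3 LF by (intro ext) (auto simp: brb_B1R brb_B1R')
      from L0[OF this] show ?thesis unfolding R using assms 3 LF by (simp add: Tm_def)
    qed
  next
    case LZ
    have "brb (LBR 1) y = (\<lambda>x. 0)" using LZ by (intro ext) (auto simp: brb_B1R brb_B1R')
    from L0[OF this] have X: "?thesis \<longleftrightarrow> 0 =
          rr \<rho> c * Tm n \<rho> c v (LBI 1) + gdiag \<rho> c LZ * Tm n \<rho> c v LZ"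
      unfolding R using LZ by (simp add: algebra_simps)
    have E: "0 =
          rr \<rho> c * Tm n \<rho> c v (LBI 1) + gdiag \<rho> c LZ * Tm n \<rho> c v LZ" unfolding TmB TmZ DD_def
      using alg1(2)[of "gdiag \<rho> c (LBI 1)" "gdiag \<rho> c LZ" "rr \<rho> c"] D unfolding DD_def by simp
    with X show ?thesis by blast
  qed
qed


lemma exists_adj:
  assumes "n > 1" "\<rho> > 0" "c > 0"
  shows "is_adjoint n \<rho> c (ad n (ind (LBR 1))) (Tm n \<rho> c)"
  unfolding is_adjoint_def
proof (intro conjI ballI)
  fix v show "Tm n \<rho> c v \<in> lvec n" using Tm_lvec assms by blast
next
  fix u v
  show "ginner n \<rho> c (ad n (ind (LBR 1)) u) v = ginner n \<rho> c u (Tm n \<rho> c v)"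
    apply (subst ginner_left[OF assms(1)])
    apply (subst ginner_right)
    by (rule sum.cong[OF refl]) (simp only: per_y[OF assms])
qed

lemma ginner_indL:
  assumes "n > 1" "k < n"
  shows "ginner n \<rho> c (ind (LE k)) w = gdiag \<rho> c (LE k) * w (LE k)"
proof -
  have "ginner n \<rho> c (ind (LE k)) w = (\<Sum>x\<in>lbas n. ind (LE k) x * (\<Sum>y\<in>lbas n. w y * gram \<rho> c x y))"
    by (simp add: ginner_def sum_distrib_left mult_ac)
  also have "\<dots> = (\<Sum>y\<in>lbas n. w y * gram \<rho> c (LE k) y)" using assms by (simp only: sum_ind2 fin_lbas) simp
  also have "\<dots> = gdiag \<rho> c (LE k) * w (LE k)" using Gv[OF assms(1)] assms by simp
  finally show ?thesis .
qed

lemma ginner_neg: "ginner n \<rho> c (\<lambda>j. - f j) w = - ginner n \<rho> c f w"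
  by (simp add: ginner_def sum_negf)

lemma ginner_neg2: "ginner n \<rho> c f (\<lambda>j. - w j) = - ginner n \<rho> c f w"
  by (simp add: ginner_def sum_negf)

lemma ginner_indR:
  assumes "n > 1" "k < n"
  shows "ginner n \<rho> c u (ind (LE k)) = gdiag \<rho> c (LE k) * u (LE k)"
proof -
  have "ginner n \<rho> c u (ind (LE k)) = (\<Sum>y\<in>lbas n. u y * (\<Sum>z\<in>lbas n. ind (LE k) z * gram \<rho> c y z))"
    by (rule ginner_right)
  also have "\<dots> = (\<Sum>y\<in>lbas n. u y * gram \<rho> c y (LE k))" using assms by simp
  also have "\<dots> = (\<Sum>y\<in>lbas n. (u y * gdiag \<rho> c (LE k)) * ind (LE k) y)"
    by (rule sum.cong) (auto simp: gram_def ind_def)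
  also have "\<dots> = gdiag \<rho> c (LE k) * u (LE k)" using assms by simp
  finally show ?thesis .
qed

lemmas ad_apply' = ad_apply[unfolded One_nat_def]

lemma A_e0: "n > 1 \<Longrightarrow> ad n (ind (LBR 1)) (ind (LE 0)) = (\<lambda>j. - ind (LE 1) j)"
  by (rule ext) (simp add: ad_apply' brb_B1R')

lemma A_e1: "n > 1 \<Longrightarrow> ad n (ind (LBR 1)) (ind (LE 1)) = (\<lambda>j. - ind (LE 0) j)"
  by (rule ext) (simp add: ad_apply' brb_B1R')

lemma A_at_e0: "n > 1 \<Longrightarrow> ad n (ind (LBR 1)) w (LE 0) = - w (LE 1)"
proof -
  assume n: "n > 1"
  have "ad n (ind (LBR 1)) w (LE 0) = (\<Sum>y\<in>lbas n. w y * ((-1) * ind (LE 1) y))"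
    unfolding ad_apply[OF n]
    by (rule sum.cong) (auto simp: brb_B1R' ind_def split: lbasis.splits)
  also have "\<dots> = - w (LE 1)" using n by (simp add: sum_negf)
  finally show ?thesis .
qed

theorem lemma4p14:
  fixes n :: nat and \<rho> c :: real
  assumes "n > 1" and "\<rho> > 0" and "c > 0"
  shows "(\<exists>T. is_adjoint n \<rho> c (ad n (ind (LBR 1))) T) \<and>
         (\<forall>T. is_adjoint n \<rho> c (ad n (ind (LBR 1))) T \<longrightarrow>
            (\<exists>u\<in>lvec n. ad n (ind (LBR 1)) (T u) \<noteq> T (ad n (ind (LBR 1)) u)))"
proof (intro conjI allI impI)
  show "\<exists>T. is_adjoint n \<rho> c (ad n (ind (LBR 1))) T" using exists_adj[OF assms] by blast
next
  fix T assume adj: "is_adjoint n \<rho> c (ad n (ind (LBR 1))) T"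
  let ?A = "ad n (ind (LBR 1))"
  let ?a = "gdiag \<rho> c (LE 0)" and ?b = "gdiag \<rho> c (LE 1)"
  have lv: "ind (LE k) \<in> lvec n" if "k < n" for k using that by (auto simp: lvec_def lbas_def ind_def)
  have lvn: "(\<lambda>j. - ind (LE k) j) \<in> lvec n" if "k < n" for k using that by (auto simp: lvec_def lbas_def ind_def)
  have n0: "0 < n" "1 < n" using assms by auto
  have ap: "?a > 0" "?b > 0" using gdiag_pos assms by blast+
  have eq: "ginner n \<rho> c (?A u) v = ginner n \<rho> c u (T v)" if "u \<in> lvec n" "v \<in> lvec n" for u v
    using adj that unfolding is_adjoint_def by blast
  have h1: "ginner n \<rho> c (?A (ind (LE 1))) (ind (LE 0)) = ginner n \<rho> c (ind (LE 1)) (T (ind (LE 0)))"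
    using eq lv n0 by blast
  have h1b: "- ?a = ?b * T (ind (LE 0)) (LE 1)"
    using h1[unfolded A_e1[OF assms(1)] ginner_neg ginner_indR[OF assms(1) n0(1)] ginner_indL[OF assms(1) n0(2)]]
    by (simp add: ind_def)
  have h2: "ginner n \<rho> c (?A (ind (LE 0))) (?A (ind (LE 0))) = ginner n \<rho> c (ind (LE 0)) (T (?A (ind (LE 0))))"
    using eq lv lvn n0 A_e0[OF assms(1)] by metis
  have h2b: "?b = ?a * T (\<lambda>j. - ind (LE 1) j) (LE 0)"
    using h2[unfolded A_e0[OF assms(1)] ginner_neg ginner_neg2 ginner_indR[OF assms(1) n0(2)] ginner_indL[OF assms(1) n0(1)]]
    by (simp add: ind_def)
  have ne: "?a \<noteq> ?b" using assms by (simp add: gdiag_def field_simps power2_eq_square)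
  show "\<exists>u\<in>lvec n. ?A (T u) \<noteq> T (?A u)"
  proof (rule bexI[of _ "ind (LE 0)"])
    show "ind (LE 0) \<in> lvec n" using lv n0 by blast
    show "?A (T (ind (LE 0))) \<noteq> T (?A (ind (LE 0)))"
    proof
      assume h: "?A (T (ind (LE 0))) = T (?A (ind (LE 0)))"
      have "?A (T (ind (LE 0))) (LE 0) = ?a / ?b"
        unfolding A_at_e0[OF assms(1)] using h1b ap by (simp add: field_simps)
      moreover have "T (?A (ind (LE 0))) (LE 0) = ?b / ?a" unfolding A_e0[OF assms(1)]
        using h2b ap by (simp add: field_simps)
      ultimately have "?a / ?b = ?b / ?a" using h by metis
      then have "?a * ?a = ?b * ?b" using ap by (simp add: field_simps)
      then have "?a = ?b" using ap by (metis abs_of_pos square_eq_iff abs_minus_cancel less_le_not_le neg_0_less_iff_less)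
      with ne show False by blast
    qed
  qed
qed

end
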